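(* Let $k \ge 1$ and $0 \le j \le k$. The number of binary words (of any length, including the empty word) that avoid $0^i1^{k-i}$ for all $i \in \{0,1,\dots,k\}$ and contain exactly $j$ zeros equals the ballot number $T(k, j+1) = \frac{k-j}{k+1}\binom{k+j+1}{k}$.
   Context: A binary word avoids a word $u$ if $u$ does not occur in it as a (not necessarily contiguous) subsequence. $0^i$ denotes $i$ consecutive zeros and $1^i$ denotes $i$ consecutive ones. The ballot numbers are $T(n,k) = \frac{n-k+1}{n+1}\binom{n+k}{n}$. *)

theory Defs
  imports Complex_Main "HOL-Library.Sublist"
begin

definition binary_word :: "nat list \<Rightarrow> bool" where
  "binary_word w \<longleftrightarrow> set w \<subseteq> {0, 1}"

definition avoids :: "nat list \<Rightarrow> nat list \<Rightarrow> bool" where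
  "avoids w u \<longleftrightarrow> \<not> subseq u w"

definition ballot :: "nat \<Rightarrow> nat \<Rightarrow> real" where
  "ballot n k = (real n - real k + 1) / (real n + 1) * real ((n + k) choose n)"

end

theory Submission
  imports Defs
begin
lemma subseq_rep_count: "subseq (replicate n a) w \<longleftrightarrow> n \<le> count_list w a"
proof (induction w arbitrary: n)
  case Nil then show ?case by (cases n) auto
next
  case (Cons x w)
  show ?case
  proof (cases n)
    case 0 then show ?thesis by simp
  next
    case (Suc m)
    have "subseq (replicate n a) (x # w) \<longleftrightarrow> (if a = x then subseq (replicate m a) w else subseq (replicate n a) w)"
      unfolding Suc by (simp only: replicate_Suc subseq_Cons2_iff)
    then show ?thesis using Cons.IH[of m] Cons.IH[of n] Suc by (cases "a = x") (simp_all del: replicate_Suc)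
  qed
qed
lemma subseq_snoc_neq:
  assumes "a \<noteq> b"
  shows "subseq (xs @ [b]) (w @ [a]) \<longleftrightarrow> subseq (xs @ [b]) w"
proof
  assume "subseq (xs @ [b]) (w @ [a])"
  then obtain u v where uv: "xs @ [b] = u @ v" "subseq u w" "subseq v [a]"
    by (auto elim: subseq_appendE)
  have "v = [] \<or> v = [a]" using uv(3)
    by (cases v) (auto split: if_splits)
  then show "subseq (xs @ [b]) w" using uv assms by auto
qed (rule subseq_rev_drop_many)

definition AV :: "nat \<Rightarrow> nat list \<Rightarrow> bool" where
  "AV k w \<longleftrightarrow> (\<forall>i \<in> {0..k}. avoids w (replicate i 0 @ replicate (k - i) 1))"

lemma AV_iff: "AV k w \<longleftrightarrow> (\<forall>i \<le> k. \<not> subseq (replicate i 0 @ replicate (k - i) 1) w)"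
  unfolding AV_def avoids_def by auto

lemma AV_0: "\<not> AV 0 w"
  unfolding AV_def avoids_def by auto

lemma AV_Nil: "AV (Suc m) []"
  unfolding AV_def avoids_def by auto

lemma AV_count: "AV k w \<Longrightarrow> count_list w 0 < k"
proof -
  assume "AV k w"
  then have "\<not> subseq (replicate k 0 @ replicate (k - k) 1) w" unfolding AV_iff by blast
  then show ?thesis using subseq_rep_count[of k 0 w] by simp
qed

lemma pat_snoc: "i \<le> m \<Longrightarrow> replicate i (0::nat) @ replicate (Suc m - i) 1
   = (replicate i 0 @ replicate (m - i) 1) @ [1]"
  by (simp add: Suc_diff_le replicate_append_same)
lemma AV_snoc1: "AV (Suc m) (w @ [1]) \<longleftrightarrow> AV m w"
proof
  assume H: "AV (Suc m) (w @ [1])"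
  show "AV m w" unfolding AV_iff
  proof (intro allI impI)
    fix i assume i: "i \<le> m"
    have "\<not> subseq (replicate i 0 @ replicate (Suc m - i) 1) (w @ [1])"
      using H i unfolding AV_iff by simp
    then show "\<not> subseq (replicate i 0 @ replicate (m - i) 1) w"
      using i by (simp only: pat_snoc subseq_append not_False_eq_True)
  qed
next
  assume H: "AV m w"
  have c: "count_list w 0 < m" using AV_count[OF H] .
  show "AV (Suc m) (w @ [1])" unfolding AV_iff
  proof (intro allI impI)
    fix i assume i: "i \<le> Suc m"
    show "\<not> subseq (replicate i 0 @ replicate (Suc m - i) 1) (w @ [1])"
    proof (cases "i \<le> m")
      case True
      have "\<not> subseq (replicate i 0 @ replicate (m - i) 1) w" using H True unfolding AV_iff by simp
      then show ?thesis using True by (simp only: pat_snoc subseq_append not_False_eq_True)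
    next
      case False
      then have "i = Suc m" using i by simp
      then show ?thesis using c subseq_rep_count[of "Suc m" 0 "w @ [1]"] by simp
    qed
  qed
qed

lemma AV_snoc0: "AV (Suc m) (w @ [0]) \<longleftrightarrow> AV (Suc m) w \<and> count_list w 0 < m"
proof
  assume H: "AV (Suc m) (w @ [0])"
  have c: "count_list w 0 < m" using AV_count[OF H] by simp
  have "AV (Suc m) w" unfolding AV_iff
  proof (intro allI impI)
    fix i assume i: "i \<le> Suc m"
    show "\<not> subseq (replicate i 0 @ replicate (Suc m - i) 1) w"
    proof (cases "i \<le> m")
      case True
      have "\<not> subseq (replicate i 0 @ replicate (Suc m - i) 1) (w @ [0])" using H i unfolding AV_iff by simp
      moreover have e: "replicate i (0::nat) @ replicate (Suc m - i) 1 = (replicate i 0 @ replicate (m - i) 1) @ [1]"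
        by (rule pat_snoc[OF True])
      moreover have sn: "subseq ((replicate i (0::nat) @ replicate (m - i) 1) @ [1]) (w @ [0]) \<longleftrightarrow> subseq ((replicate i 0 @ replicate (m - i) 1) @ [1]) w"
        by (rule subseq_snoc_neq) simp
      ultimately show ?thesis by (simp only: e sn not_False_eq_True)
    next
      case False
      then have "i = Suc m" using i by simp
      then show ?thesis using c subseq_rep_count[of "Suc m" 0 "w"] by simp
    qed
  qed
  then show "AV (Suc m) w \<and> count_list w 0 < m" using c by simp
next
  assume H: "AV (Suc m) w \<and> count_list w 0 < m"
  show "AV (Suc m) (w @ [0])" unfolding AV_iff
  proof (intro allI impI)
    fix i assume i: "i \<le> Suc m"
    show "\<not> subseq (replicate i 0 @ replicate (Suc m - i) 1) (w @ [0])"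
    proof (cases "i \<le> m")
      case True
      have "\<not> subseq (replicate i 0 @ replicate (Suc m - i) 1) w" using H i unfolding AV_iff by simp
      moreover have e: "replicate i (0::nat) @ replicate (Suc m - i) 1 = (replicate i 0 @ replicate (m - i) 1) @ [1]"
        by (rule pat_snoc[OF True])
      moreover have sn: "subseq ((replicate i (0::nat) @ replicate (m - i) 1) @ [1]) (w @ [0]) \<longleftrightarrow> subseq ((replicate i 0 @ replicate (m - i) 1) @ [1]) w"
        by (rule subseq_snoc_neq) simp
      ultimately show ?thesis by (simp only: e sn not_False_eq_True)
    next
      case False
      then have "i = Suc m" using i by simp
      then show ?thesis using H subseq_rep_count[of "Suc m" 0 "w @ [0]"] by simp
    qed
  qed
qed
definition S :: "nat \<Rightarrow> nat \<Rightarrow> nat list set" where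
  "S k j = {w. binary_word w \<and> AV k w \<and> count_list w 0 = j}"

lemma binary_snoc: "binary_word (w @ [y]) \<longleftrightarrow> binary_word w \<and> (y = 0 \<or> y = 1)"
  unfolding binary_word_def by auto

lemma S_0: "S 0 j = {}" unfolding S_def using AV_0 by auto

lemma S_big: "k \<le> j \<Longrightarrow> S k j = {}" unfolding S_def using AV_count by fastforce

lemma S_dec: "S (Suc m) j = (if j = 0 then {[]} else {})
   \<union> (\<lambda>w. w @ [0]) ` (if 0 < j \<and> j < Suc m then S (Suc m) (j - 1) else {})
   \<union> (\<lambda>w. w @ [1]) ` S m j" (is "?L = ?R")
proof
  show "?L \<subseteq> ?R"
  proof
    fix w assume w: "w \<in> ?L"
    show "w \<in> ?R"
    proof (cases w rule: rev_cases)
      case Nil then show ?thesis using w unfolding S_def by auto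
    next
      case (snoc ys y)
      have b: "binary_word ys" "y = 0 \<or> y = 1" using w snoc binary_snoc unfolding S_def by auto
      show ?thesis
      proof (cases "y = 0")
        case True
        have "AV (Suc m) ys" "count_list ys 0 < m" using w snoc True AV_snoc0 unfolding S_def by auto
        moreover have "count_list ys 0 + 1 = j" using w snoc True unfolding S_def by auto
        ultimately have "ys \<in> S (Suc m) (j - 1)" "0 < j \<and> j < Suc m" using b unfolding S_def by auto
        then show ?thesis using snoc True by auto
      next
        case False
        then have y1: "y = 1" using b by simp
        have "AV m ys" using w snoc y1 AV_snoc1 unfolding S_def by auto
        moreover have "count_list ys 0 = j" using w snoc y1 unfolding S_def by auto
        ultimately have "ys \<in> S m j" using b unfolding S_def by auto
        then show ?thesis using snoc y1 by auto
      qed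
    qed
  qed
next
  show "?R \<subseteq> ?L"
  proof
    fix w assume w: "w \<in> ?R"
    consider (e) "j = 0" "w = []" | (z) ys where "0 < j" "j < Suc m" "ys \<in> S (Suc m) (j - 1)" "w = ys @ [0]"
      | (o) ys where "ys \<in> S m j" "w = ys @ [1]"
      using w by (auto split: if_splits)
    then show "w \<in> ?L"
    proof cases
      case e then show ?thesis unfolding S_def binary_word_def using AV_Nil by auto
    next
      case z then show ?thesis unfolding S_def using AV_snoc0 binary_snoc by auto
    next
      case o then show ?thesis unfolding S_def using AV_snoc1 binary_snoc by auto
    qed
  qed
qed
lemma ballot_one: "ballot n 1 = real n"
proof -
  have "(n + 1) choose n = Suc n" by simp
  then show ?thesis unfolding ballot_def by (simp add: field_simps)
qed

lemma ballot_rec: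
  "ballot (Suc k) (Suc j + 1) = ballot (Suc k) (Suc j) + ballot k (Suc j + 1)"
proof -
  define n where "n = k + Suc j + 1"
  define x where "x = n choose Suc k"
  define y where "y = n choose k"
  have r1: "Suc k * x = (Suc j + 1) * y"
  proof -
    have "Suc k * x = n * ((n - 1) choose k)" unfolding x_def by (rule binomial_absorption)
    also have "\<dots> = (n - k) * y" unfolding y_def by (rule binomial_absorb_comp[symmetric])
    finally show ?thesis unfolding n_def by simp
  qed
  have r2: "Suc n choose Suc k = y + x" unfolding x_def y_def by simp
  have e1: "Suc k + (Suc j + 1) = Suc n" unfolding n_def by simp
  have e2: "Suc k + Suc j = n" unfolding n_def by simp
  have e3: "k + (Suc j + 1) = n" unfolding n_def by simp
  have r1': "(real k + 1) * real x = (real j + 2) * real y"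
    using r1 by (metis (mono_tags, lifting) of_nat_mult of_nat_Suc add_2_eq_Suc' of_nat_add
        add.commute Suc_eq_plus1 add_Suc_shift numeral_2_eq_2 of_nat_numeral of_nat_1 one_add_one)
  have hx: "real x = (real j + 2) * real y / (real k + 1)" using r1' by (simp add: field_simps)
  have A: "ballot (Suc k) (Suc j + 1) = (real k - real j)/(real k + 2) * (real y + real x)"
    unfolding ballot_def e1 r2 by (simp add: field_simps)
  have B: "ballot (Suc k) (Suc j) = (real k - real j + 1)/(real k + 2) * real x"
    unfolding ballot_def e2 x_def by (simp add: field_simps)
  have C: "ballot k (Suc j + 1) = (real k - real j - 1)/(real k + 1) * real y"
    unfolding ballot_def e3 y_def by (simp add: field_simps)
  have D: "(real k - real j)*(real k + 1)*(real y + real x) - ((real k - real j + 1)*(real k + 1)*real x + (real k - real j - 1)*(real k + 2)*real y)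
     = (real j + 2) * real y - (real k + 1) * real x" by algebra
  hence P: "(real k - real j)*(real k + 1)*(real y + real x) = (real k - real j + 1)*(real k + 1)*real x + (real k - real j - 1)*(real k + 2)*real y"
    using r1' by linarith
  have n1: "real k + 1 \<noteq> 0" "real k + 2 \<noteq> 0" by linarith+
  have "(real k - real j)/(real k + 2) * (real y + real x) = (real k - real j + 1)/(real k + 2) * real x + (real k - real j - 1)/(real k + 1) * real y"
    using n1 P by (simp add: divide_simps) (simp add: algebra_simps)
  then show ?thesis unfolding A B C by simp
qed

lemma main: "\<forall>j \<le> k. finite (S k j) \<and> real (card (S k j)) = ballot k (j + 1)"
proof (induction k)
  case 0
  show ?case using S_0 ballot_one[of 0] by simp
next
  case (Suc m)
  note outer = Suc.IH
  have "finite (S (Suc m) j) \<and> real (card (S (Suc m) j)) = ballot (Suc m) (j + 1)"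
    if "j \<le> Suc m" for j
    using that
  proof (induction j)
    case 0
    have d: "S (Suc m) 0 = insert [] ((\<lambda>w. w @ [1]) ` S m 0)" using S_dec[of m 0] by simp
    have f: "finite (S m 0)" "real (card (S m 0)) = ballot m 1" using outer by auto
    have n: "[] \<notin> (\<lambda>w. w @ [1]) ` S m 0" by auto
    have "card (S (Suc m) 0) = Suc (card (S m 0))"
      unfolding d using f n by (simp add: card_image inj_on_def)
    then show ?case using d f ballot_one[of m] ballot_one[of "Suc m"] by simp
  next
    case (Suc j)
    show ?case
    proof (cases "Suc j = Suc m")
      case True
      then show ?thesis using S_big[of "Suc m" "Suc j"] unfolding ballot_def by simp
    next
      case False
      then have jl: "Suc j < Suc m" using Suc.prems by simp
      have d: "S (Suc m) (Suc j) = (\<lambda>w. w @ [0]) ` S (Suc m) j \<union> (\<lambda>w. w @ [1]) ` S m (Suc j)"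
        using S_dec[of m "Suc j"] jl by simp
      have f1: "finite (S (Suc m) j)" "real (card (S (Suc m) j)) = ballot (Suc m) (j + 1)"
        using Suc.IH Suc.prems by auto
      have f2: "finite (S m (Suc j))" "real (card (S m (Suc j))) = ballot m (Suc j + 1)"
        using outer jl by auto
      have dis: "(\<lambda>w. w @ [0]) ` S (Suc m) j \<inter> (\<lambda>w. w @ [1]) ` S m (Suc j) = {}" by auto
      have "card (S (Suc m) (Suc j)) = card (S (Suc m) j) + card (S m (Suc j))"
        unfolding d using f1 f2 dis by (simp add: card_Un_disjoint card_image inj_on_def)
      then show ?thesis using d f1 f2 ballot_rec[of m j] by simp
    qed
  qed
  then show ?case by blast
qed
theorem corollary3p6:
  fixes k j :: nat
  assumes "k \<ge> 1" and "j \<le> k"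
  shows "real (card {w. binary_word w
                      \<and> (\<forall>i \<in> {0..k}. avoids w (replicate i 0 @ replicate (k - i) 1))
                      \<and> count_list w 0 = j})
         = ballot k (j + 1)"
proof -
  have "{w. binary_word w
                      \<and> (\<forall>i \<in> {0..k}. avoids w (replicate i 0 @ replicate (k - i) 1))
                      \<and> count_list w 0 = j} = S k j"
    unfolding S_def AV_def by simp
  then show ?thesis using main[of k] assms by simp
qed

end
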